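(* Let $\Lambda$ be a finite cubical complex, $k\ge1$, $q\ge2$ an integer, $x_{\mathbf{c}}\in(0,1)$ for $\mathbf{c}\in\Lambda_k$. Let $\Omega=\{0,1\}^{\Lambda_k}$, $\Sigma=\ker(\partial_k)\subset C_k$, $f:\Omega\to2^\Sigma$, $f(\omega)=\Sigma^\downarrow(\omega):=\{\eta\in\Sigma\mid\mathrm{supp}(\eta)\subset\omega\}$, and $$\rho[\omega]\propto\prod_{\mathbf{c}\in\Lambda_k(\omega)}\frac{x_{\mathbf{c}}}{1-x_{\mathbf{c}}}\ (\omega\in\Omega),\qquad\gamma[\eta]\propto1\ (\eta\in\Sigma).$$ Let $\mathscr{P}$ be the probability measure on $\Omega\times\Sigma$ with $\mathscr{P}[\omega,\eta]\propto\rho[\omega]\gamma[\eta]\mathbf{1}[\eta\in f(\omega)]$. Then: (a) The marginal $\mathscr{P}_\Sigma$ equals $\ell^q_{\Lambda_k,x}$, and for $\omega\in\Omega$ the conditional measure $\mathscr{P}[\cdot\mid\omega]$ is uniform on $\Sigma^\downarrow(\omega)$. (b) The marginal $\mathscr{P}_\Omega$ equals $\phi^q_{\Lambda_k,p}$ with $p$ determined by $x_{\mathbf{c}}=\frac{p_{\mathbf{c}}}{p_{\mathbf{c}}+q(1-p_{\mathbf{c}})}$. For each $\eta\in\Sigma$, $\mathscr{P}[\cdot\mid\eta]=\mathbb{P}_x\cup\delta_{\mathrm{supp}(\eta)}$, Bernoulli percolation on $\Lambda_k$ with parameters $(x_{\mathbf{c}})$ conditioned on all $k$-cells of $\mathrm{supp}(\eta)$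 being open.
   Context: A finite cubical complex $\Lambda$ consists of finite sets $\Lambda_j$ of $j$-cells (copies of $\{0,1\}^j$) closed under taking faces; $F_i^\pm(\mathbf{c})$ are the faces $\{x_i=1\},\{x_i=0\}$ of a $j$-cell. Each $j$-cell ($j\ge1$) has two orientations (for $j\ge2$ an ordering $e_1\wedge\dots\wedge e_j$ of the cell's edges at a root vertex $v$ modulo even permutations, reversed when moving the root across an edge; faces $F_i^\pm(\mathfrak{c})$ containing $v$ inherit $e_1\wedge\cdots\wedge\widehat{e_i}\wedge\cdots\wedge e_j$ rooted at $v$; for $j=1$ the orientations $(v,w),(w,v)$). $C_j=\{\sigma\in(\mathbb{Z}/q\mathbb{Z})^{\mathcal{O}(\Lambda_j)}\mid\sigma_{-\mathfrak{c}}=-\sigma_{\mathfrak{c}}\}$, $C_0=(\mathbb{Z}/q\mathbb{Z})^{\Lambda_0}$; $\partial_j:C_j\to C_{j-1}$ is linear with $\partial_j\mathbf{1}^{\mathfrak{c}}=\sum_{i=1}^j(-1)^{i+1}(\mathbf{1}^{F_i^+(\mathfrak{c})}-\mathbf{1}^{F_i^-(\mathfrak{c})})$ ($j\ge2$), $\partial_1\mathbf{1}^{(v,w)}=\mathbf{1}_w-\mathbf{1}_v$, $\partial_0:=0$. $\mathrm{supp}(\eta)$ is the set of $k$-cells on which $\eta$ is nonzero. The $q$-flow model is $\ell^q_{\Lambda_k,x}[\eta]\propto\prod_{\mathbf{c}\in\mathrm{supp}(\eta)}x_{\mathbf{c}}$ on $\ker(\partial_k)$. Elements $\omega\in\{0,1\}^{\Lambda_k}$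 are identified with $k$-spanning subcomplexes (all cells of dimension $<k$, the $k$-cells $\Lambda_k(\omega)$, nothing higher); $\partial^\omega_k$ is $\partial_k$ restricted to chains supported on $\Lambda_k(\omega)$, $\partial^\omega_{k-1}=\partial_{k-1}$, and $\phi^q_{\Lambda_k,p}[\omega]\propto\frac{|\ker(\partial^\omega_{k-1})|}{|\mathrm{Im}(\partial^\omega_k)|}\prod_{\mathbf{c}\in\Lambda_k(\omega)}\frac{p_{\mathbf{c}}}{1-p_{\mathbf{c}}}$. $\mathbb{P}_x$ is Bernoulli percolation on $\Lambda_k$; $\pi\cup\nu$ is the law of the union of independent samples; $\delta$ is a Dirac mass. *)

theory Defs
  imports "HOL-Combinatorics.Permutations" Complex_Main
begin

text \<open>A parametrised j-cell is an injective vertex map c from the cube {0,1}^j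
  (boolean lists of length j) into a vertex type 'v, made extensional (value
  undefined off the cube). A geometric j-cell is an orbit of such maps under the
  symmetry group of the cube (signed permutations of the coordinates).\<close>

definition cube :: "nat \<Rightarrow> bool list set" where
  "cube j = {xs. length xs = j}"

definition is_par :: "nat \<Rightarrow> (bool list \<Rightarrow> 'v) \<Rightarrow> bool" where
  "is_par j c \<longleftrightarrow> inj_on c (cube j) \<and> (\<forall>xs. length xs \<noteq> j \<longrightarrow> c xs = undefined)"

text \<open>Symmetries of {0,1}^j: a permutation of the coordinates together with a set of
  coordinates to reflect (x_i -> 1 - x_i).\<close>

definition SymG :: "nat \<Rightarrow> ((nat \<Rightarrow> nat) \<times> (nat \<Rightarrow> bool)) set" where
  "SymG j = {(\<pi>, s). \<pi> permutes {..<j} \<and> (\<forall>i. j \<le> i \<longrightarrow> \<not> s i)}"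

definition act :: "nat \<Rightarrow> (nat \<Rightarrow> nat) \<times> (nat \<Rightarrow> bool) \<Rightarrow> bool list \<Rightarrow> bool list" where
  "act j g xs = map (\<lambda>i. (xs ! (fst g i)) \<noteq> snd g i) [0..<j]"

definition reparam :: "nat \<Rightarrow> (bool list \<Rightarrow> 'v) \<Rightarrow> (nat \<Rightarrow> nat) \<times> (nat \<Rightarrow> bool) \<Rightarrow> (bool list \<Rightarrow> 'v)" where
  "reparam j c g = (\<lambda>xs. if length xs = j then c (act j g xs) else undefined)"

text \<open>Relative orientation of c and (reparam j c g): sign of the permutation, times
  -1 for every reflected coordinate (moving the root across an edge reverses the
  orientation).\<close>

definition symsign :: "nat \<Rightarrow> (nat \<Rightarrow> nat) \<times> (nat \<Rightarrow> bool) \<Rightarrow> int" where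
  "symsign j g = sign (fst g) * (-1) ^ card {i. i < j \<and> snd g i}"

text \<open>Face F_{i+1}^{+} (b = True, i.e. x_{i+1} = 1) resp. F_{i+1}^{-} (b = False) of a
  parametrised j-cell, for 0-based i < j, with its inherited coordinate
  parametrisation (hence inherited orientation).\<close>

definition face :: "nat \<Rightarrow> (bool list \<Rightarrow> 'v) \<Rightarrow> nat \<Rightarrow> bool \<Rightarrow> (bool list \<Rightarrow> 'v)" where
  "face j c i b = (\<lambda>ys. if length ys = j - 1 then c (take i ys @ b # drop i ys) else undefined)"

text \<open>L j is the set of all parametrisations of the j-cells of the complex.\<close>

definition cubical_complex :: "(nat \<Rightarrow> (bool list \<Rightarrow> 'v) set) \<Rightarrow> bool" where
  "cubical_complex L \<longleftrightarrow>
     (\<exists>N. \<forall>j\<ge>N. L j = {}) \<and>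
     (\<forall>j. finite (L j)) \<and>
     (\<forall>j. \<forall>c\<in>L j. is_par j c) \<and>
     (\<forall>j. \<forall>c\<in>L j. \<forall>g\<in>SymG j. reparam j c g \<in> L j) \<and>
     (\<forall>j. \<forall>c\<in>L j. \<forall>i<j. \<forall>b. face j c i b \<in> L (j - 1))"

definition orbit :: "nat \<Rightarrow> (bool list \<Rightarrow> 'v) \<Rightarrow> (bool list \<Rightarrow> 'v) set" where
  "orbit j c = {reparam j c g | g. g \<in> SymG j}"

definition cells :: "(nat \<Rightarrow> (bool list \<Rightarrow> 'v) set) \<Rightarrow> nat \<Rightarrow> (bool list \<Rightarrow> 'v) set set" where
  "cells L j = orbit j ` L j"

definition rep :: "(bool list \<Rightarrow> 'v) set \<Rightarrow> (bool list \<Rightarrow> 'v)" where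
  "rep C = (SOME c. c \<in> C)"

text \<open>A j-chain is a function on parametrised j-cells with values in {0..<q}
  (representing Z/qZ) that is antisymmetric under orientation reversal:
  its value on reparam j c g is symsign j g times its value on c. This is the
  group C_j (for j = 0 the condition is vacuous and C_0 = (Z/qZ)^{\<Lambda>_0}).\<close>

definition chains :: "(nat \<Rightarrow> (bool list \<Rightarrow> 'v) set) \<Rightarrow> int \<Rightarrow> nat \<Rightarrow> ((bool list \<Rightarrow> 'v) \<Rightarrow> int) set" where
  "chains L q j = {\<sigma>. (\<forall>c. c \<notin> L j \<longrightarrow> \<sigma> c = 0) \<and> (\<forall>c\<in>L j. 0 \<le> \<sigma> c \<and> \<sigma> c < q) \<and>
      (\<forall>c\<in>L j. \<forall>g\<in>SymG j. \<sigma> (reparam j c g) = (symsign j g * \<sigma> c) mod q)}"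

definition unitc :: "nat \<Rightarrow> int \<Rightarrow> (bool list \<Rightarrow> 'v) \<Rightarrow> ((bool list \<Rightarrow> 'v) \<Rightarrow> int)" where
  "unitc j q c = (\<lambda>d. (\<Sum>g\<in>SymG j. if d = reparam j c g then symsign j g else 0) mod q)"

text \<open>The boundary map \<partial>_j : C_j \<rightarrow> C_{j-1}, the linear extension of
  \<partial>_j 1^c = \<Sum>_{i=1}^j (-1)^{i+1} (1^{F_i^+ c} - 1^{F_i^- c}) (0-based index i here);
  for j = 0 it is the zero map.\<close>

definition bd :: "(nat \<Rightarrow> (bool list \<Rightarrow> 'v) set) \<Rightarrow> int \<Rightarrow> nat \<Rightarrow> ((bool list \<Rightarrow> 'v) \<Rightarrow> int) \<Rightarrow> ((bool list \<Rightarrow> 'v) \<Rightarrow> int)" where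
  "bd L q j \<sigma> = (\<lambda>d. (\<Sum>C\<in>cells L j. \<sigma> (rep C) *
       (\<Sum>i<j. (-1) ^ i * (unitc (j - 1) q (face j (rep C) i True) d
                           - unitc (j - 1) q (face j (rep C) i False) d))) mod q)"

definition supp :: "(nat \<Rightarrow> (bool list \<Rightarrow> 'v) set) \<Rightarrow> nat \<Rightarrow> ((bool list \<Rightarrow> 'v) \<Rightarrow> int) \<Rightarrow> (bool list \<Rightarrow> 'v) set set" where
  "supp L j \<eta> = {C \<in> cells L j. \<exists>c\<in>C. \<eta> c \<noteq> 0}"

definition cycles :: "(nat \<Rightarrow> (bool list \<Rightarrow> 'v) set) \<Rightarrow> int \<Rightarrow> nat \<Rightarrow> ((bool list \<Rightarrow> 'v) \<Rightarrow> int) set" where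
  "cycles L q j = {\<eta> \<in> chains L q j. bd L q j \<eta> = (\<lambda>_. 0)}"

text \<open>\<Sigma>\<down>(\<omega>) for \<omega> a set of k-cells (identified with an element of {0,1}^{\<Lambda>_k}).\<close>

definition sigma_down :: "(nat \<Rightarrow> (bool list \<Rightarrow> 'v) set) \<Rightarrow> int \<Rightarrow> nat \<Rightarrow> (bool list \<Rightarrow> 'v) set set \<Rightarrow> ((bool list \<Rightarrow> 'v) \<Rightarrow> int) set" where
  "sigma_down L q k \<omega> = {\<eta> \<in> cycles L q k. supp L k \<eta> \<subseteq> \<omega>}"

definition flow_model :: "(nat \<Rightarrow> (bool list \<Rightarrow> 'v) set) \<Rightarrow> int \<Rightarrow> nat \<Rightarrow> ((bool list \<Rightarrow> 'v) set \<Rightarrow> real) \<Rightarrow> ((bool list \<Rightarrow> 'v) \<Rightarrow> int) \<Rightarrow> real" where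
  "flow_model L q k x \<eta> = (\<Prod>C\<in>supp L k \<eta>. x C) / (\<Sum>\<eta>'\<in>cycles L q k. \<Prod>C\<in>supp L k \<eta>'. x C)"

definition rc_weight :: "(nat \<Rightarrow> (bool list \<Rightarrow> 'v) set) \<Rightarrow> int \<Rightarrow> nat \<Rightarrow> ((bool list \<Rightarrow> 'v) set \<Rightarrow> real) \<Rightarrow> (bool list \<Rightarrow> 'v) set set \<Rightarrow> real" where
  "rc_weight L q k p \<omega> =
     real (card {\<sigma> \<in> chains L q (k - 1). bd L q (k - 1) \<sigma> = (\<lambda>_. 0)})
     / real (card (bd L q k ` {\<sigma> \<in> chains L q k. supp L k \<sigma> \<subseteq> \<omega>}))
     * (\<Prod>C\<in>\<omega>. p C / (1 - p C))"

definition rc_model :: "(nat \<Rightarrow> (bool list \<Rightarrow> 'v) set) \<Rightarrow> int \<Rightarrow> nat \<Rightarrow> ((bool list \<Rightarrow> 'v) set \<Rightarrow> real) \<Rightarrow> (bool list \<Rightarrow> 'v) set set \<Rightarrow> real" where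
  "rc_model L q k p \<omega> = rc_weight L q k p \<omega> / (\<Sum>\<omega>'\<in>Pow (cells L k). rc_weight L q k p \<omega>')"

text \<open>Bernoulli percolation \<P>_x on a finite set of cells, and the law of the union of
  a sample of it with a fixed set A (i.e. \<P>_x \<union> \<delta>_A).\<close>

definition bernoulli_perc :: "'c set \<Rightarrow> ('c \<Rightarrow> real) \<Rightarrow> 'c set \<Rightarrow> real" where
  "bernoulli_perc \<Lambda> x \<omega> = (\<Prod>C\<in>\<Lambda>. if C \<in> \<omega> then x C else 1 - x C)"

definition union_law :: "'c set \<Rightarrow> ('c \<Rightarrow> real) \<Rightarrow> 'c set \<Rightarrow> 'c set \<Rightarrow> real" where
  "union_law \<Lambda> x A \<omega> = (\<Sum>\<omega>'\<in>{\<omega>' \<in> Pow \<Lambda>. \<omega>' \<union> A = \<omega>}. bernoulli_perc \<Lambda> x \<omega>')"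

definition rho_w :: "((bool list \<Rightarrow> 'v) set \<Rightarrow> real) \<Rightarrow> (bool list \<Rightarrow> 'v) set set \<Rightarrow> real" where
  "rho_w x \<omega> = (\<Prod>C\<in>\<omega>. x C / (1 - x C))"

definition joint_w :: "(nat \<Rightarrow> (bool list \<Rightarrow> 'v) set) \<Rightarrow> int \<Rightarrow> nat \<Rightarrow> ((bool list \<Rightarrow> 'v) set \<Rightarrow> real) \<Rightarrow> (bool list \<Rightarrow> 'v) set set \<Rightarrow> ((bool list \<Rightarrow> 'v) \<Rightarrow> int) \<Rightarrow> real" where
  "joint_w L q k x \<omega> \<eta> = rho_w x \<omega> * 1 * (if \<eta> \<in> sigma_down L q k \<omega> then 1 else 0)"

definition jointP :: "(nat \<Rightarrow> (bool list \<Rightarrow> 'v) set) \<Rightarrow> int \<Rightarrow> nat \<Rightarrow> ((bool list \<Rightarrow> 'v) set \<Rightarrow> real) \<Rightarrow> (bool list \<Rightarrow> 'v) set set \<Rightarrow> ((bool list \<Rightarrow> 'v) \<Rightarrow> int) \<Rightarrow> real" where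
  "jointP L q k x \<omega> \<eta> = joint_w L q k x \<omega> \<eta> /
     (\<Sum>\<omega>'\<in>Pow (cells L k). \<Sum>\<eta>'\<in>cycles L q k. joint_w L q k x \<omega>' \<eta>')"

definition marg_Sigma where
  "marg_Sigma L q k x \<eta> = (\<Sum>\<omega>\<in>Pow (cells L k). jointP L q k x \<omega> \<eta>)"

definition marg_Omega where
  "marg_Omega L q k x \<omega> = (\<Sum>\<eta>\<in>cycles L q k. jointP L q k x \<omega> \<eta>)"

definition cond_given_omega where
  "cond_given_omega L q k x \<omega> \<eta> = jointP L q k x \<omega> \<eta> / marg_Omega L q k x \<omega>"

definition cond_given_eta where
  "cond_given_eta L q k x \<eta> \<omega> = jointP L q k x \<omega> \<eta> / marg_Sigma L q k x \<eta>"

end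

theory Submission
  imports Defs "HOL-Library.FuncSet"
begin

definition idg :: "(nat \<Rightarrow> nat) \<times> (nat \<Rightarrow> bool)" where "idg = (id, \<lambda>_. False)"
definition gcomp :: "(nat \<Rightarrow> nat) \<times> (nat \<Rightarrow> bool) \<Rightarrow> (nat \<Rightarrow> nat) \<times> (nat \<Rightarrow> bool) \<Rightarrow> (nat \<Rightarrow> nat) \<times> (nat \<Rightarrow> bool)" where
  "gcomp g h = (fst h \<circ> fst g, \<lambda>i. snd h (fst g i) \<noteq> snd g i)"
definition ginv :: "(nat \<Rightarrow> nat) \<times> (nat \<Rightarrow> bool) \<Rightarrow> (nat \<Rightarrow> nat) \<times> (nat \<Rightarrow> bool)" where
  "ginv g = (inv (fst g), \<lambda>i. snd g (inv (fst g) i))"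

lemma idg_Sym: "idg \<in> SymG j"
  by (simp add: idg_def SymG_def permutes_id)

lemma gcomp_Sym: "g \<in> SymG j \<Longrightarrow> h \<in> SymG j \<Longrightarrow> gcomp g h \<in> SymG j"
  unfolding SymG_def gcomp_def
  by (auto simp: permutes_compose permutes_not_in)

lemma ginv_Sym: "g \<in> SymG j \<Longrightarrow> ginv g \<in> SymG j"
  unfolding SymG_def ginv_def
  by (auto simp: permutes_inv permutes_not_in[OF permutes_inv])

lemma comp_ginv: "g \<in> SymG j \<Longrightarrow> gcomp g (ginv g) = idg"
  unfolding SymG_def ginv_def gcomp_def idg_def
  by (auto simp: permutes_inverses fun_eq_iff)

lemma length_act[simp]: "length (act j g xs) = j"
  by (simp add: act_def)

lemma act_comp:
  assumes "g \<in> SymG j" "h \<in> SymG j" "length xs = j"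
  shows "act j g (act j h xs) = act j (gcomp g h) xs"
proof -
  have p: "fst g permutes {..<j}" using assms(1) by (auto simp: SymG_def)
  have "\<And>i. i < j \<Longrightarrow> fst g i < j" using permutes_in_image[OF p] by auto
  then show ?thesis using assms
    by (auto simp: act_def gcomp_def intro!: nth_equalityI)
qed

lemma reparam_comp:
  assumes "g \<in> SymG j" "h \<in> SymG j"
  shows "reparam j (reparam j c g) h = reparam j c (gcomp g h)"
  using act_comp[OF assms] by (auto simp: reparam_def fun_eq_iff)

lemma act_id: "length xs = j \<Longrightarrow> act j idg xs = xs"
  by (auto simp: act_def idg_def intro!: nth_equalityI)

lemma reparam_id: "is_par j c \<Longrightarrow> reparam j c idg = c"
  by (auto simp: reparam_def is_par_def act_id fun_eq_iff)

lemma reparam_inj: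
  assumes c: "is_par j c" and g: "g \<in> SymG j" and h: "h \<in> SymG j"
    and e: "reparam j c g = reparam j c h"
  shows "g = h"
proof -
  have pg: "fst g permutes {..<j}" and ph: "fst h permutes {..<j}"
    using g h by (auto simp: SymG_def)
  have A: "act j g xs = act j h xs" if "length xs = j" for xs
  proof -
    have "c (act j g xs) = c (act j h xs)" using fun_cong[OF e, of xs] that
      by (simp add: reparam_def)
    moreover have "inj_on c (cube j)" using c by (simp add: is_par_def)
    ultimately show ?thesis by (auto simp: cube_def inj_on_def)
  qed
  have B: "(xs ! (fst g i) \<noteq> snd g i) = (xs ! (fst h i) \<noteq> snd h i)" if "length xs = j" "i < j" for xs i
    using arg_cong[OF A[OF that(1)], of "\<lambda>l. l ! i"] that(2) by (simp add: act_def)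
  have lg: "fst g i < j" "fst h i < j" if "i < j" for i
    using permutes_in_image[OF pg] permutes_in_image[OF ph] that by auto
  have s: "snd g i = snd h i" for i
  proof (cases "i < j")
    case True
    then show ?thesis using B[of "replicate j False" i] lg[OF True] by simp
  next
    case False
    then show ?thesis using g h by (auto simp: SymG_def)
  qed
  have f: "fst g i = fst h i" for i
  proof (cases "i < j")
    case True
    have "(map (\<lambda>m. m = fst g i) [0..<j] ! (fst g i) \<noteq> snd g i) = (map (\<lambda>m. m = fst g i) [0..<j] ! (fst h i) \<noteq> snd h i)"
      using B[of "map (\<lambda>m. m = fst g i) [0..<j]" i] True by simp
    then show ?thesis using lg[OF True] s[of i] by (cases "snd h i") auto
  next
    case False
    then show ?thesis using permutes_not_in[OF pg] permutes_not_in[OF ph] by auto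
  qed
  show ?thesis using s f by (simp add: prod_eq_iff fun_eq_iff)
qed

lemma neg1_pow_card: "(-1::int) ^ card {i. i < (j::nat) \<and> P i} = (\<Prod>i<j. if P i then -1 else 1)"
proof (induction j)
  case 0 then show ?case by simp
next
  case (Suc j)
  have "{i. i < Suc j \<and> P i} = (if P j then insert j {i. i < j \<and> P i} else {i. i < j \<and> P i})"
    by (auto simp: less_Suc_eq)
  then show ?case using Suc by (simp add: lessThan_Suc)
qed

lemma symsign_comp:
  assumes g: "g \<in> SymG j" and h: "h \<in> SymG j"
  shows "symsign j (gcomp g h) = symsign j g * symsign j h"
proof -
  have pg: "fst g permutes {..<j}" and ph: "fst h permutes {..<j}"
    using g h by (auto simp: SymG_def)
  have s1: "sign (fst h \<circ> fst g) = sign (fst h) * sign (fst g)"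
    by (rule sign_compose) (auto intro: permutes_imp_permutation pg ph)
  have "(\<Prod>i<j. if snd h (fst g i) \<noteq> snd g i then -1 else (1::int))
        = (\<Prod>i<j. (if snd h (fst g i) then -1 else 1) * (if snd g i then -1 else 1))"
    by (rule prod.cong) auto
  also have "\<dots> = (\<Prod>i<j. (if snd h (fst g i) then -1 else 1)) * (\<Prod>i<j. (if snd g i then -1 else (1::int)))"
    by (rule prod.distrib)
  also have "(\<Prod>i<j. (if snd h (fst g i) then -1 else (1::int))) = (\<Prod>i<j. (if snd h i then -1 else 1))"
    using prod.permute[OF pg, of "\<lambda>i. if snd h i then -1 else (1::int)"] by (simp add: o_def)
  finally have s2: "(\<Prod>i<j. if snd h (fst g i) \<noteq> snd g i then -1 else (1::int)) =
     (\<Prod>i<j. (if snd h i then -1 else 1)) * (\<Prod>i<j. (if snd g i then -1 else (1::int)))" .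
  show ?thesis
    unfolding symsign_def gcomp_def neg1_pow_card using s1 s2 by (simp add: mult_ac)
qed

lemma symsign_id: "symsign j idg = 1"
  by (simp add: symsign_def idg_def)

lemma cc_par: "cubical_complex L \<Longrightarrow> c \<in> L j \<Longrightarrow> is_par j c"
  by (simp add: cubical_complex_def)
lemma cc_rep: "cubical_complex L \<Longrightarrow> c \<in> L j \<Longrightarrow> g \<in> SymG j \<Longrightarrow> reparam j c g \<in> L j"
  by (simp add: cubical_complex_def)
lemma cc_fin: "cubical_complex L \<Longrightarrow> finite (L j)"
  by (simp add: cubical_complex_def)

lemma orbit_self: "is_par j c \<Longrightarrow> c \<in> orbit j c"
proof -
  assume "is_par j c"
  then have "c = reparam j c idg" by (simp add: reparam_id)
  then show ?thesis unfolding orbit_def using idg_Sym by blast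
qed

lemma orbit_sub: "cubical_complex L \<Longrightarrow> c \<in> L j \<Longrightarrow> orbit j c \<subseteq> L j"
  unfolding orbit_def using cc_rep by blast

lemma orbit_eq:
  assumes L: "cubical_complex L" and c: "c \<in> L j" and d: "d \<in> orbit j c"
  shows "orbit j d = orbit j c"
proof -
  obtain g where g: "g \<in> SymG j" and dg: "d = reparam j c g" using d by (auto simp: orbit_def)
  have "reparam j d h \<in> orbit j c" if "h \<in> SymG j" for h
    unfolding dg reparam_comp[OF g that] orbit_def using gcomp_Sym[OF g that] by blast
  moreover have "reparam j c h \<in> orbit j d" if "h \<in> SymG j" for h
  proof -
    have "reparam j d (gcomp (ginv g) h) = reparam j c (gcomp g (gcomp (ginv g) h))"
      unfolding dg by (rule reparam_comp[OF g gcomp_Sym[OF ginv_Sym[OF g] that]])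
    also have "gcomp g (gcomp (ginv g) h) = gcomp (gcomp g (ginv g)) h"
      unfolding gcomp_def by (auto simp: fun_eq_iff)
    also have "\<dots> = gcomp idg h" using comp_ginv[OF g] by simp
    also have "\<dots> = h" by (simp add: gcomp_def idg_def)
    finally have "reparam j c h = reparam j d (gcomp (ginv g) h)" by simp
    then show ?thesis unfolding orbit_def using gcomp_Sym[OF ginv_Sym[OF g] that] by blast
  qed
  ultimately show ?thesis unfolding orbit_def by blast
qed

lemma cell_facts:
  assumes L: "cubical_complex L" and C: "C \<in> cells L j"
  shows "rep C \<in> C" "orbit j (rep C) = C" "rep C \<in> L j" "C \<subseteq> L j"
proof -
  obtain c where c: "c \<in> L j" and Cc: "C = orbit j c" using C by (auto simp: cells_def)
  have "c \<in> C" using orbit_self[OF cc_par[OF L c]] Cc by simp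
  then show r: "rep C \<in> C" unfolding rep_def by (metis someI)
  show "orbit j (rep C) = C" using orbit_eq[OF L c] r Cc by simp
  show "C \<subseteq> L j" using orbit_sub[OF L c] Cc by simp
  then show "rep C \<in> L j" using r by blast
qed

lemma orbit_cell: "c \<in> L j \<Longrightarrow> orbit j c \<in> cells L j"
  by (simp add: cells_def)

definition gof :: "nat \<Rightarrow> (bool list \<Rightarrow> 'v) \<Rightarrow> (nat \<Rightarrow> nat) \<times> (nat \<Rightarrow> bool)" where
  "gof j c = (THE g. g \<in> SymG j \<and> c = reparam j (rep (orbit j c)) g)"

lemma gof_ex1:
  assumes L: "cubical_complex L" and c: "c \<in> L j"
  shows "\<exists>!g. g \<in> SymG j \<and> c = reparam j (rep (orbit j c)) g"
proof -
  let ?C = "orbit j c"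
  have C: "?C \<in> cells L j" using c by (rule orbit_cell)
  note cf = cell_facts[OF L C]
  have "c \<in> orbit j (rep ?C)" using cf(2) orbit_self[OF cc_par[OF L c]] by simp
  then obtain g where "g \<in> SymG j" "c = reparam j (rep ?C) g" by (auto simp: orbit_def)
  moreover have "g1 = g2" if "g1 \<in> SymG j" "c = reparam j (rep ?C) g1" "g2 \<in> SymG j" "c = reparam j (rep ?C) g2" for g1 g2
    using reparam_inj[OF cc_par[OF L cf(3)], of g1 g2] that by simp
  ultimately show ?thesis by blast
qed

lemma gof_spec:
  assumes L: "cubical_complex L" and c: "c \<in> L j"
  shows "gof j c \<in> SymG j" "c = reparam j (rep (orbit j c)) (gof j c)"
  using theI'[OF gof_ex1[OF L c]] unfolding gof_def by auto

lemma gof_unique: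
  assumes L: "cubical_complex L" and c: "c \<in> L j" and g: "g \<in> SymG j" "c = reparam j (rep (orbit j c)) g"
  shows "gof j c = g"
proof -
  have "gof j c \<in> SymG j \<and> c = reparam j (rep (orbit j c)) (gof j c)" using gof_spec[OF L c] by simp
  moreover have "g \<in> SymG j \<and> c = reparam j (rep (orbit j c)) g" using g by simp
  ultimately show ?thesis using gof_ex1[OF L c] by blast
qed

definition addc :: "int \<Rightarrow> ('a \<Rightarrow> int) \<Rightarrow> ('a \<Rightarrow> int) \<Rightarrow> ('a \<Rightarrow> int)" where
  "addc q \<sigma> \<tau> = (\<lambda>c. (\<sigma> c + \<tau> c) mod q)"
definition subc :: "int \<Rightarrow> ('a \<Rightarrow> int) \<Rightarrow> ('a \<Rightarrow> int) \<Rightarrow> ('a \<Rightarrow> int)" where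
  "subc q \<sigma> \<tau> = (\<lambda>c. (\<sigma> c - \<tau> c) mod q)"

lemma chains_range: "q > 0 \<Longrightarrow> \<sigma> \<in> chains L q j \<Longrightarrow> 0 \<le> \<sigma> c \<and> \<sigma> c < q"
  unfolding chains_def by (cases "c \<in> L j") auto

lemma zero_chain: "q > 0 \<Longrightarrow> (\<lambda>_. 0) \<in> chains L q j"
  unfolding chains_def by auto

lemma bd_zero: "bd L q j (\<lambda>_. 0) = (\<lambda>_. 0)"
  unfolding bd_def by simp

lemma supp_zero: "supp L j (\<lambda>_. 0) = {}"
  unfolding supp_def by simp

lemma chains_finite:
  assumes "cubical_complex L"
  shows "finite (chains L q j)"
proof -
  have "chains L q j \<subseteq> {f. \<forall>x. (x \<in> L j \<longrightarrow> f x \<in> {0..<q}) \<and> (x \<notin> L j \<longrightarrow> f x = 0)}"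
    unfolding chains_def by auto
  moreover have "finite {f. \<forall>x. (x \<in> L j \<longrightarrow> f x \<in> {0..<q}) \<and> (x \<notin> L j \<longrightarrow> f x = (0::int))}"
    by (rule finite_set_of_finite_funs) (auto simp: cc_fin[OF assms])
  ultimately show ?thesis by (rule finite_subset)
qed

lemma addc_chain:
  assumes q: "q > 0" and s: "\<sigma> \<in> chains L q j" and t: "\<tau> \<in> chains L q j"
  shows "addc q \<sigma> \<tau> \<in> chains L q j"
proof -
  have "(\<sigma> (reparam j c g) + \<tau> (reparam j c g)) mod q = (symsign j g * ((\<sigma> c + \<tau> c) mod q)) mod q"
    if "c \<in> L j" "g \<in> SymG j" for c g
  proof -
    have "\<sigma> (reparam j c g) = (symsign j g * \<sigma> c) mod q" "\<tau> (reparam j c g) = (symsign j g * \<tau> c) mod q"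
      using s t that unfolding chains_def by auto
    then show ?thesis by (simp add: mod_add_eq mod_mult_right_eq distrib_left)
  qed
  then show ?thesis using s t q unfolding chains_def addc_def by auto
qed

lemma subc_chain:
  assumes q: "q > 0" and s: "\<sigma> \<in> chains L q j" and t: "\<tau> \<in> chains L q j"
  shows "subc q \<sigma> \<tau> \<in> chains L q j"
proof -
  have "(\<sigma> (reparam j c g) - \<tau> (reparam j c g)) mod q = (symsign j g * ((\<sigma> c - \<tau> c) mod q)) mod q"
    if "c \<in> L j" "g \<in> SymG j" for c g
  proof -
    have "\<sigma> (reparam j c g) = (symsign j g * \<sigma> c) mod q" "\<tau> (reparam j c g) = (symsign j g * \<tau> c) mod q"
      using s t that unfolding chains_def by auto
    then show ?thesis by (simp add: mod_diff_eq mod_mult_right_eq right_diff_distrib)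
  qed
  then show ?thesis using s t q unfolding chains_def subc_def by auto
qed

lemma supp_addc: "supp L j (addc q \<sigma> \<tau>) \<subseteq> supp L j \<sigma> \<union> supp L j \<tau>"
  unfolding supp_def addc_def by (auto, metis mod_0)

lemma supp_subc: "supp L j (subc q \<sigma> \<tau>) \<subseteq> supp L j \<sigma> \<union> supp L j \<tau>"
  unfolding supp_def subc_def by (auto, metis mod_0)

lemma sum_mod_lin:
  fixes f g M :: "'b \<Rightarrow> int"
  shows "(\<Sum>C\<in>A. ((f C + g C) mod q) * M C) mod q = ((\<Sum>C\<in>A. f C * M C) mod q + (\<Sum>C\<in>A. g C * M C) mod q) mod q"
proof -
  have "(\<Sum>C\<in>A. ((f C + g C) mod q) * M C) mod q = (\<Sum>C\<in>A. (((f C + g C) mod q) * M C) mod q) mod q"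
    by (simp add: mod_sum_eq)
  also have "\<dots> = (\<Sum>C\<in>A. ((f C + g C) * M C) mod q) mod q"
    by (simp add: mod_mult_left_eq)
  also have "\<dots> = (\<Sum>C\<in>A. f C * M C + g C * M C) mod q"
    by (simp add: mod_sum_eq distrib_right)
  also have "\<dots> = ((\<Sum>C\<in>A. f C * M C) mod q + (\<Sum>C\<in>A. g C * M C) mod q) mod q"
    by (simp add: sum.distrib mod_add_eq)
  finally show ?thesis .
qed

lemma sum_mod_lin_diff:
  fixes f g M :: "'b \<Rightarrow> int"
  shows "(\<Sum>C\<in>A. ((f C - g C) mod q) * M C) mod q = ((\<Sum>C\<in>A. f C * M C) mod q - (\<Sum>C\<in>A. g C * M C) mod q) mod q"
proof -
  have "(\<Sum>C\<in>A. ((f C - g C) mod q) * M C) mod q = (\<Sum>C\<in>A. (((f C - g C) mod q) * M C) mod q) mod q"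
    by (simp add: mod_sum_eq)
  also have "\<dots> = (\<Sum>C\<in>A. ((f C - g C) * M C) mod q) mod q"
    by (simp add: mod_mult_left_eq)
  also have "\<dots> = (\<Sum>C\<in>A. f C * M C - g C * M C) mod q"
    by (simp add: mod_sum_eq left_diff_distrib)
  also have "\<dots> = ((\<Sum>C\<in>A. f C * M C) mod q - (\<Sum>C\<in>A. g C * M C) mod q) mod q"
    by (simp add: sum_subtractf mod_diff_eq)
  finally show ?thesis .
qed

lemma bd_addc: "bd L q j (addc q \<sigma> \<tau>) d = (bd L q j \<sigma> d + bd L q j \<tau> d) mod q"
  unfolding bd_def addc_def by (rule sum_mod_lin)

lemma bd_subc: "bd L q j (subc q \<sigma> \<tau>) d = (bd L q j \<sigma> d - bd L q j \<tau> d) mod q"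
  unfolding bd_def subc_def by (rule sum_mod_lin_diff)

lemma bd_range: "q > 0 \<Longrightarrow> 0 \<le> bd L q j \<sigma> d \<and> bd L q j \<sigma> d < q"
  unfolding bd_def by simp

definition CH :: "(nat \<Rightarrow> (bool list \<Rightarrow> 'v) set) \<Rightarrow> int \<Rightarrow> nat \<Rightarrow> (bool list \<Rightarrow> 'v) set set \<Rightarrow> ((bool list \<Rightarrow> 'v) \<Rightarrow> int) set" where
  "CH L q k \<omega> = {\<sigma> \<in> chains L q k. supp L k \<sigma> \<subseteq> \<omega>}"

lemma card_CH:
  fixes L :: "nat \<Rightarrow> (bool list \<Rightarrow> 'v) set"
  assumes L: "cubical_complex L" and q: "q > 0" and om: "\<omega> \<subseteq> cells L k"
  shows "card (CH L q k \<omega>) = nat q ^ card \<omega>"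
proof -
  define \<Phi> where "\<Phi> = (\<lambda>\<sigma>::(bool list \<Rightarrow> 'v) \<Rightarrow> int. restrict (\<lambda>C. \<sigma> (rep C)) \<omega>)"
  define \<Psi> where "\<Psi> = (\<lambda>a d. if d \<in> L k \<and> orbit k d \<in> \<omega> then (symsign k (gof k d) * a (orbit k d)) mod q else 0)"
  have "finite (cells L k)" using cc_fin[OF L] unfolding cells_def by simp
  then have fin: "finite \<omega>" using om by (rule rev_finite_subset)
  have orb_in: "orbit k c = C" if C1: "C \<in> cells L k" and C2: "c \<in> C" for C c
  proof -
    obtain c0 where "c0 \<in> L k" "C = orbit k c0" using C1 by (auto simp: cells_def)
    then show ?thesis using orbit_eq[OF L] C2 by auto
  qed
  have inL: "c \<in> L k" if "C \<in> cells L k" "c \<in> C" for C c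
    using cell_facts(4)[OF L that(1)] that(2) by auto
  have "bij_betw \<Phi> (CH L q k \<omega>) (\<omega> \<rightarrow>\<^sub>E {0..<q})"
  proof (rule bij_betw_byWitness[where f'=\<Psi>])
    show "\<forall>\<sigma>\<in>CH L q k \<omega>. \<Psi> (\<Phi> \<sigma>) = \<sigma>"
    proof
      fix \<sigma> assume s: "\<sigma> \<in> CH L q k \<omega>"
      have "\<Psi> (\<Phi> \<sigma>) d = \<sigma> d" for d
      proof (cases "d \<in> L k")
        case False
        then show ?thesis using s by (simp add: \<Psi>_def CH_def chains_def)
      next
        case dL: True
        show ?thesis
        proof (cases "orbit k d \<in> \<omega>")
          case False
          have "orbit k d \<notin> supp L k \<sigma>" using False s by (auto simp: CH_def)
          then have "\<sigma> d = 0" using orbit_cell[of d L k] dL orbit_self[OF cc_par[OF L dL]]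
            by (auto simp: supp_def)
          then show ?thesis using False by (simp add: \<Psi>_def)
        next
          case True
          let ?C = "orbit k d"
          have C: "?C \<in> cells L k" using dL by (rule orbit_cell)
          have "\<sigma> d = \<sigma> (reparam k (rep ?C) (gof k d))" using gof_spec(2)[OF L dL] by simp
          also have "\<dots> = (symsign k (gof k d) * \<sigma> (rep ?C)) mod q"
            using s cell_facts(3)[OF L C] gof_spec(1)[OF L dL] by (auto simp: CH_def chains_def)
          finally show ?thesis using True dL by (simp add: \<Psi>_def \<Phi>_def)
        qed
      qed
      then show "\<Psi> (\<Phi> \<sigma>) = \<sigma>" by (rule ext)
    qed
    show "\<forall>a\<in>\<omega> \<rightarrow>\<^sub>E {0..<q}. \<Phi> (\<Psi> a) = a"
    proof
      fix a assume a: "a \<in> \<omega> \<rightarrow>\<^sub>E {0..<q}"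
      have "\<Phi> (\<Psi> a) C = a C" for C
      proof (cases "C \<in> \<omega>")
        case False
        then show ?thesis using a by (simp add: \<Phi>_def PiE_def extensional_def)
      next
        case True
        have C: "C \<in> cells L k" using True om by auto
        note cf = cell_facts[OF L C]
        have "gof k (rep C) = idg"
          using gof_unique[OF L cf(3) idg_Sym] cf(2) reparam_id[OF cc_par[OF L cf(3)]] by simp
        moreover have "0 \<le> a C" "a C < q" using a True by auto
        ultimately show ?thesis using True cf by (simp add: \<Phi>_def \<Psi>_def symsign_id)
      qed
      then show "\<Phi> (\<Psi> a) = a" by (rule ext)
    qed
    show "\<Phi> ` CH L q k \<omega> \<subseteq> \<omega> \<rightarrow>\<^sub>E {0..<q}"
    proof
      fix y assume "y \<in> \<Phi> ` CH L q k \<omega>"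
      then obtain \<sigma> where s: "\<sigma> \<in> CH L q k \<omega>" and y: "y = \<Phi> \<sigma>" by auto
      show "y \<in> \<omega> \<rightarrow>\<^sub>E {0..<q}"
        using chains_range[OF q, of \<sigma>] s unfolding y \<Phi>_def CH_def by auto
    qed
    show "\<Psi> ` (\<omega> \<rightarrow>\<^sub>E {0..<q}) \<subseteq> CH L q k \<omega>"
    proof
      fix y assume "y \<in> \<Psi> ` (\<omega> \<rightarrow>\<^sub>E {0..<q})"
      then obtain a where a: "a \<in> \<omega> \<rightarrow>\<^sub>E {0..<q}" and y: "y = \<Psi> a" by auto
      have ch1: "\<forall>c. c \<notin> L k \<longrightarrow> y c = 0" by (simp add: y \<Psi>_def)
      have ch2: "\<forall>c\<in>L k. 0 \<le> y c \<and> y c < q" using q by (simp add: y \<Psi>_def)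
      have ch3: "y (reparam k c g) = (symsign k g * y c) mod q" if c: "c \<in> L k" and g: "g \<in> SymG k" for c g
      proof -
        have d: "reparam k c g \<in> L k" by (rule cc_rep[OF L c g])
        have "reparam k c g \<in> orbit k c" unfolding orbit_def using g by blast
        then have od: "orbit k (reparam k c g) = orbit k c" by (rule orbit_eq[OF L c])
        show ?thesis
        proof (cases "orbit k c \<in> \<omega>")
          case False
          then show ?thesis using od by (simp add: y \<Psi>_def)
        next
          case True
          let ?r = "rep (orbit k c)" and ?h = "gof k c"
          have h: "?h \<in> SymG k" "c = reparam k ?r ?h" using gof_spec[OF L c] by auto
          have "reparam k c g = reparam k ?r (gcomp ?h g)"
            using reparam_comp[OF h(1) g, of ?r] h(2) by simp
          then have "gof k (reparam k c g) = gcomp ?h g"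
            using gof_unique[OF L d gcomp_Sym[OF h(1) g]] od by simp
          then have "y (reparam k c g) = (symsign k ?h * symsign k g * a (orbit k c)) mod q"
            using True d od symsign_comp[OF h(1) g] by (simp add: y \<Psi>_def)
          moreover have "y c = (symsign k ?h * a (orbit k c)) mod q" using True c by (simp add: y \<Psi>_def)
          moreover have "(symsign k g * ((symsign k ?h * a (orbit k c)) mod q)) mod q = (symsign k g * (symsign k ?h * a (orbit k c))) mod q"
            by (rule mod_mult_right_eq)
          ultimately show ?thesis by (simp add: mult_ac)
        qed
      qed
      have sp: "supp L k y \<subseteq> \<omega>"
      proof
        fix C assume "C \<in> supp L k y"
        then obtain c where C: "C \<in> cells L k" and c: "c \<in> C" "y c \<noteq> 0" by (auto simp: supp_def)
        then have "c \<in> L k \<and> orbit k c \<in> \<omega>" by (auto simp: y \<Psi>_def split: if_splits)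
        then show "C \<in> \<omega>" using orb_in[OF C c(1)] by simp
      qed
      show "y \<in> CH L q k \<omega>" using ch1 ch2 ch3 sp by (auto simp: CH_def chains_def)
    qed
  qed
  then have "card (CH L q k \<omega>) = card (\<omega> \<rightarrow>\<^sub>E {0..<q})" by (rule bij_betw_same_card)
  also have "\<dots> = nat q ^ card \<omega>" using fin by (simp add: card_PiE)
  finally show ?thesis .
qed

lemma rank_nullity:
  fixes L :: "nat \<Rightarrow> (bool list \<Rightarrow> 'v) set"
  assumes L: "cubical_complex L" and q: "q > 0"
  shows "card (CH L q k \<omega>) = card (sigma_down L q k \<omega>) * card (bd L q k ` CH L q k \<omega>)"
proof -
  let ?A = "CH L q k \<omega>" and ?K = "sigma_down L q k \<omega>" and ?B = "bd L q k"
  have finA: "finite ?A" using chains_finite[OF L, of q k] by (auto simp: CH_def)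
  have K: "?K = {\<eta> \<in> ?A. ?B \<eta> = (\<lambda>_. 0)}" by (auto simp: sigma_down_def cycles_def CH_def)
  have fib: "card {\<sigma> \<in> ?A. ?B \<sigma> = y} = card ?K" if y: "y \<in> ?B ` ?A" for y
  proof -
    obtain s0 where s0: "s0 \<in> ?A" and ys: "y = ?B s0" using y by auto
    have rng: "0 \<le> \<sigma> c \<and> \<sigma> c < q" if "\<sigma> \<in> ?A" for \<sigma> c
      using chains_range[OF q] that by (auto simp: CH_def)
    have "bij_betw (addc q s0) ?K {\<sigma> \<in> ?A. ?B \<sigma> = y}"
    proof (rule bij_betw_byWitness[where f'="\<lambda>\<tau>. subc q \<tau> s0"])
      show "\<forall>a\<in>?K. subc q (addc q s0 a) s0 = a"
      proof
        fix a assume "a \<in> ?K"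
        then have "a \<in> ?A" using K by auto
        show "subc q (addc q s0 a) s0 = a"
        proof (rule ext)
          fix c
          have "((s0 c + a c) mod q - s0 c) mod q = (s0 c + a c - s0 c) mod q" by (rule mod_diff_left_eq)
          also have "\<dots> = a c" using rng[OF \<open>a \<in> ?A\<close>, of c] by simp
          finally show "subc q (addc q s0 a) s0 c = a c" by (simp add: subc_def addc_def)
        qed
      qed
      show "\<forall>a\<in>{\<sigma> \<in> ?A. ?B \<sigma> = y}. addc q s0 (subc q a s0) = a"
      proof
        fix a assume "a \<in> {\<sigma> \<in> ?A. ?B \<sigma> = y}"
        then have "a \<in> ?A" by auto
        show "addc q s0 (subc q a s0) = a"
        proof (rule ext)
          fix c
          have "(s0 c + (a c - s0 c) mod q) mod q = (s0 c + (a c - s0 c)) mod q" by (rule mod_add_right_eq)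
          also have "\<dots> = a c" using rng[OF \<open>a \<in> ?A\<close>, of c] by simp
          finally show "addc q s0 (subc q a s0) c = a c" by (simp add: subc_def addc_def)
        qed
      qed
      show "addc q s0 ` ?K \<subseteq> {\<sigma> \<in> ?A. ?B \<sigma> = y}"
      proof
        fix t assume "t \<in> addc q s0 ` ?K"
        then obtain a where a: "a \<in> ?A" "?B a = (\<lambda>_. 0)" and t: "t = addc q s0 a" using K by auto
        have "t \<in> ?A" using addc_chain[OF q] supp_addc[of L k q s0 a] a s0 unfolding t by (auto simp: CH_def)
        moreover have "?B t = y"
        proof (rule ext)
          fix d
          have "?B a d = 0" using a(2) by simp
          then show "?B t d = y d" unfolding t ys bd_addc using bd_range[OF q, of L k s0 d] by simp
        qed
        ultimately show "t \<in> {\<sigma> \<in> ?A. ?B \<sigma> = y}" by auto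
      qed
      show "(\<lambda>\<tau>. subc q \<tau> s0) ` {\<sigma> \<in> ?A. ?B \<sigma> = y} \<subseteq> ?K"
      proof
        fix t assume "t \<in> (\<lambda>\<tau>. subc q \<tau> s0) ` {\<sigma> \<in> ?A. ?B \<sigma> = y}"
        then obtain a where a: "a \<in> ?A" "?B a = y" and t: "t = subc q a s0" by auto
        have "t \<in> ?A" using subc_chain[OF q] supp_subc[of L k q a s0] a s0 unfolding t by (auto simp: CH_def)
        moreover have "?B t = (\<lambda>_. 0)"
        proof (rule ext)
          fix d
          show "?B t d = 0" unfolding t bd_subc using a(2) ys by simp
        qed
        ultimately show "t \<in> ?K" using K by auto
      qed
    qed
    then show ?thesis by (simp add: bij_betw_same_card)
  qed
  have "card ?A = (\<Sum>x\<in>?A. 1::nat)" by simp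
  also have "\<dots> = (\<Sum>y\<in>?B ` ?A. \<Sum>x\<in>{\<sigma> \<in> ?A. ?B \<sigma> = y}. 1)" by (rule sum.image_gen[OF finA])
  also have "\<dots> = (\<Sum>y\<in>?B ` ?A. card {\<sigma> \<in> ?A. ?B \<sigma> = y})" by simp
  also have "\<dots> = (\<Sum>y\<in>?B ` ?A. card ?K)" using fib by (rule sum.cong[OF refl])
  finally show ?thesis by simp
qed

lemma prod_sum_if:
  fixes f g :: "'a \<Rightarrow> real"
  assumes "finite A"
  shows "(\<Sum>X\<in>Pow A. \<Prod>a\<in>A. if a \<in> X then f a else g a) = (\<Prod>a\<in>A. f a + g a)"
proof -
  have "(\<Prod>a\<in>A. if a \<in> X then f a else g a) = (\<Prod>a\<in>X. f a) * (\<Prod>a\<in>A - X. g a)" if "X \<in> Pow A" for X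
  proof -
    have "(\<Prod>a\<in>A. if a \<in> X then f a else g a) = prod f (A \<inter> {a. a \<in> X}) * prod g (A \<inter> - {a. a \<in> X})"
      by (rule prod.If_cases[OF assms])
    moreover have "A \<inter> {a. a \<in> X} = X" "A \<inter> - {a. a \<in> X} = A - X" using that by auto
    ultimately show ?thesis by simp
  qed
  then have "(\<Sum>X\<in>Pow A. \<Prod>a\<in>A. if a \<in> X then f a else g a) = (\<Sum>X\<in>Pow A. (\<Prod>a\<in>X. f a) * (\<Prod>a\<in>A - X. g a))"
    by (rule sum.cong[OF refl])
  also have "\<dots> = (\<Prod>a\<in>A. f a + g a)" by (rule prod_add[OF assms, symmetric])
  finally show ?thesis .
qed

lemma bp_split:
  assumes "finite K" "S \<subseteq> K"
  shows "bernoulli_perc K x \<omega> = (\<Prod>C\<in>K - S. if C \<in> \<omega> then x C else 1 - x C) * (\<Prod>C\<in>S. if C \<in> \<omega> then x C else 1 - x C)"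
  unfolding bernoulli_perc_def by (rule prod.subset_diff[OF assms(2) assms(1)])

lemma sum_up:
  assumes fin: "finite K" and S: "S \<subseteq> K"
  shows "(\<Sum>\<omega>\<in>{\<omega> \<in> Pow K. S \<subseteq> \<omega>}. bernoulli_perc K x \<omega>) = (\<Prod>C\<in>S. x C)"
proof -
  have im: "{\<omega> \<in> Pow K. S \<subseteq> \<omega>} = (\<lambda>T. S \<union> T) ` Pow (K - S)"
  proof
    show "{\<omega> \<in> Pow K. S \<subseteq> \<omega>} \<subseteq> (\<lambda>T. S \<union> T) ` Pow (K - S)"
    proof
      fix \<omega> assume "\<omega> \<in> {\<omega> \<in> Pow K. S \<subseteq> \<omega>}"
      then have "\<omega> = S \<union> (\<omega> - S)" "\<omega> - S \<in> Pow (K - S)" by auto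
      then show "\<omega> \<in> (\<lambda>T. S \<union> T) ` Pow (K - S)" by blast
    qed
    show "(\<lambda>T. S \<union> T) ` Pow (K - S) \<subseteq> {\<omega> \<in> Pow K. S \<subseteq> \<omega>}" using S by auto
  qed
  have inj: "inj_on (\<lambda>T. S \<union> T) (Pow (K - S))"
    by (rule inj_onI) blast
  have eq: "bernoulli_perc K x (S \<union> T) = (\<Prod>C\<in>K - S. if C \<in> T then x C else 1 - x C) * (\<Prod>C\<in>S. x C)"
    if "T \<in> Pow (K - S)" for T
  proof -
    have "(\<Prod>C\<in>K - S. if C \<in> S \<union> T then x C else 1 - x C) = (\<Prod>C\<in>K - S. if C \<in> T then x C else 1 - x C)"
      by (rule prod.cong) auto
    moreover have "(\<Prod>C\<in>S. if C \<in> S \<union> T then x C else 1 - x C) = (\<Prod>C\<in>S. x C)"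
      by (rule prod.cong) auto
    ultimately show ?thesis using bp_split[OF fin S, of x "S \<union> T"] by simp
  qed
  have "(\<Sum>\<omega>\<in>{\<omega> \<in> Pow K. S \<subseteq> \<omega>}. bernoulli_perc K x \<omega>) = (\<Sum>T\<in>Pow (K - S). bernoulli_perc K x (S \<union> T))"
    unfolding im by (rule sum.reindex[OF inj, unfolded o_def])
  also have "\<dots> = (\<Sum>T\<in>Pow (K - S). (\<Prod>C\<in>K - S. if C \<in> T then x C else 1 - x C) * (\<Prod>C\<in>S. x C))"
    using eq by (rule sum.cong[OF refl])
  also have "\<dots> = (\<Sum>T\<in>Pow (K - S). (\<Prod>C\<in>K - S. if C \<in> T then x C else 1 - x C)) * (\<Prod>C\<in>S. x C)"
    by (simp add: sum_distrib_right)
  also have "(\<Sum>T\<in>Pow (K - S). (\<Prod>C\<in>K - S. if C \<in> T then x C else 1 - x C)) = (\<Prod>C\<in>K - S. x C + (1 - x C))"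
    by (rule prod_sum_if) (use fin in auto)
  finally show ?thesis by simp
qed

lemma union_law_eq:
  assumes fin: "finite K" and S: "S \<subseteq> K" and om: "\<omega> \<subseteq> K" and nz: "(\<Prod>C\<in>S. x C) \<noteq> 0"
  shows "union_law K x S \<omega> = (if S \<subseteq> \<omega> then bernoulli_perc K x \<omega> / (\<Prod>C\<in>S. x C) else 0)"
proof (cases "S \<subseteq> \<omega>")
  case False
  then have "{\<omega>' \<in> Pow K. \<omega>' \<union> S = \<omega>} = {}" by auto
  then show ?thesis using False unfolding union_law_def by (simp only: sum.empty if_False)
next
  case True
  let ?F = "\<lambda>T. (\<omega> - S) \<union> T"
  have im: "{\<omega>' \<in> Pow K. \<omega>' \<union> S = \<omega>} = ?F ` Pow S"
  proof
    show "{\<omega>' \<in> Pow K. \<omega>' \<union> S = \<omega>} \<subseteq> ?F ` Pow S"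
    proof
      fix \<omega>' assume a: "\<omega>' \<in> {\<omega>' \<in> Pow K. \<omega>' \<union> S = \<omega>}"
      then have "\<omega>' = ?F (\<omega>' \<inter> S)" "\<omega>' \<inter> S \<in> Pow S" by auto
      then show "\<omega>' \<in> ?F ` Pow S" by blast
    qed
    show "?F ` Pow S \<subseteq> {\<omega>' \<in> Pow K. \<omega>' \<union> S = \<omega>}" using True om by auto
  qed
  have inj: "inj_on ?F (Pow S)"
    by (rule inj_onI) blast
  let ?c = "\<Prod>C\<in>K - S. if C \<in> \<omega> then x C else 1 - x C"
  have eq: "bernoulli_perc K x (?F T) = ?c * (\<Prod>C\<in>S. if C \<in> T then x C else 1 - x C)"
    if "T \<in> Pow S" for T
  proof -
    have "(\<Prod>C\<in>K - S. if C \<in> ?F T then x C else 1 - x C) = ?c"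
      using that by (intro prod.cong) auto
    moreover have "(\<Prod>C\<in>S. if C \<in> ?F T then x C else 1 - x C) = (\<Prod>C\<in>S. if C \<in> T then x C else 1 - x C)"
      by (rule prod.cong) auto
    ultimately show ?thesis using bp_split[OF fin S, of x "?F T"] by simp
  qed
  have finS: "finite S" using fin S finite_subset by blast
  have "union_law K x S \<omega> = (\<Sum>T\<in>Pow S. bernoulli_perc K x (?F T))"
    unfolding union_law_def im by (rule sum.reindex[OF inj, unfolded o_def])
  also have "\<dots> = (\<Sum>T\<in>Pow S. ?c * (\<Prod>C\<in>S. if C \<in> T then x C else 1 - x C))"
    using eq by (rule sum.cong[OF refl])
  also have "\<dots> = ?c * (\<Sum>T\<in>Pow S. (\<Prod>C\<in>S. if C \<in> T then x C else 1 - x C))"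
    by (simp add: sum_distrib_left)
  also have "(\<Sum>T\<in>Pow S. (\<Prod>C\<in>S. if C \<in> T then x C else 1 - x C)) = (\<Prod>C\<in>S. x C + (1 - x C))"
    by (rule prod_sum_if[OF finS])
  finally have u: "union_law K x S \<omega> = ?c" by simp
  have "bernoulli_perc K x \<omega> = ?c * (\<Prod>C\<in>S. x C)"
    using bp_split[OF fin S, of x \<omega>] True by (simp add: subset_iff)
  then show ?thesis using u True nz by simp
qed

lemma rho_bp:
  assumes fin: "finite K" and om: "\<omega> \<subseteq> K" and x: "\<forall>C\<in>K. 0 < x C \<and> x C < 1"
  shows "rho_w x \<omega> * (\<Prod>C\<in>K. 1 - x C) = bernoulli_perc K x \<omega>"
proof -
  have "(\<Prod>C\<in>K. 1 - x C) = (\<Prod>C\<in>K - \<omega>. 1 - x C) * (\<Prod>C\<in>\<omega>. 1 - x C)"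
    by (rule prod.subset_diff[OF om fin])
  moreover have "rho_w x \<omega> * (\<Prod>C\<in>\<omega>. 1 - x C) = (\<Prod>C\<in>\<omega>. x C)"
    unfolding rho_w_def prod.distrib[symmetric] using x om by (intro prod.cong) force+
  moreover have "bernoulli_perc K x \<omega> = (\<Prod>C\<in>K - \<omega>. 1 - x C) * (\<Prod>C\<in>\<omega>. x C)"
  proof -
    have "bernoulli_perc K x \<omega> = (\<Prod>C\<in>K - \<omega>. if C \<in> \<omega> then x C else 1 - x C) * (\<Prod>C\<in>\<omega>. if C \<in> \<omega> then x C else 1 - x C)"
      by (rule bp_split[OF fin om])
    also have "(\<Prod>C\<in>K - \<omega>. if C \<in> \<omega> then x C else 1 - x C) = (\<Prod>C\<in>K - \<omega>. 1 - x C)"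
      by (rule prod.cong) auto
    also have "(\<Prod>C\<in>\<omega>. if C \<in> \<omega> then x C else 1 - x C) = (\<Prod>C\<in>\<omega>. x C)"
      by (rule prod.cong) auto
    finally show ?thesis .
  qed
  ultimately show ?thesis by (simp add: mult_ac)
qed

lemma p_ratio:
  fixes p x q :: real
  assumes "0 < p" "p < 1" "q \<ge> 2" "x = p / (p + q * (1 - p))"
  shows "p / (1 - p) = q * (x / (1 - x))"
proof -
  have s: "p + q * (1 - p) > 0" using assms by (smt (verit) mult_pos_pos)
  have h1: "1 - x = q * (1 - p) / (p + q * (1 - p))" using s assms(4) by (simp add: field_simps)
  have "x / (1 - x) = (p / (p + q * (1 - p))) / (q * (1 - p) / (p + q * (1 - p)))"
    using h1 assms(4) by simp
  also have "\<dots> = p / (q * (1 - p))" using s by simp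
  finally have "x / (1 - x) = p / (q * (1 - p))" .
  moreover have "q > 0" "1 - p > 0" using assms by auto
  ultimately show ?thesis by (simp add: field_simps)
qed

theorem proposition4p7:
  fixes L :: "nat \<Rightarrow> (bool list \<Rightarrow> 'v) set" and k :: nat and q :: int
    and x :: "(bool list \<Rightarrow> 'v) set \<Rightarrow> real"
  assumes "cubical_complex L" and "k \<ge> 1" and "q \<ge> 2"
    and "\<forall>C\<in>cells L k. 0 < x C \<and> x C < 1"
  shows "(\<forall>\<eta>\<in>cycles L q k. marg_Sigma L q k x \<eta> = flow_model L q k x \<eta>)
    \<and> (\<forall>\<omega>\<in>Pow (cells L k). \<forall>\<eta>\<in>cycles L q k.
          cond_given_omega L q k x \<omega> \<eta> =
            (if \<eta> \<in> sigma_down L q k \<omega> then 1 / real (card (sigma_down L q k \<omega>)) else 0))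
    \<and> (\<forall>p. (\<forall>C\<in>cells L k. 0 < p C \<and> p C < 1 \<and> x C = p C / (p C + real_of_int q * (1 - p C)))
          \<longrightarrow> (\<forall>\<omega>\<in>Pow (cells L k). marg_Omega L q k x \<omega> = rc_model L q k p \<omega>))
    \<and> (\<forall>\<eta>\<in>cycles L q k. \<forall>\<omega>\<in>Pow (cells L k).
          cond_given_eta L q k x \<eta> \<omega> = union_law (cells L k) x (supp L k \<eta>) \<omega>)"
proof -
  note L = assms(1)
  have q0: "q > 0" using assms(3) by simp
  define K where "K = cells L k"
  define CY where "CY = cycles L q k"
  define sd where "sd = sigma_down L q k"
  define S where "S = supp L k"
  define D where "D = (\<Prod>C\<in>K. 1 - x C)"
  define Z where "Z = (\<Sum>\<omega>'\<in>Pow (cells L k). \<Sum>\<eta>'\<in>cycles L q k. joint_w L q k x \<omega>' \<eta>')"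
  have xK: "\<forall>C\<in>K. 0 < x C \<and> x C < 1" using assms(4) K_def by simp
  have finK: "finite K" unfolding K_def cells_def using cc_fin[OF L] by simp
  have finCY: "finite CY" unfolding CY_def cycles_def using chains_finite[OF L, of q k] by simp
  have zCY: "(\<lambda>_. 0) \<in> CY" unfolding CY_def cycles_def using zero_chain[OF q0, of L k] bd_zero[of L q k] by blast
  have SK: "S \<eta> \<subseteq> K" for \<eta> unfolding S_def K_def supp_def by auto
  have Dpos: "D > 0" unfolding D_def using xK by (intro prod_pos) auto
  have rpos: "rho_w x \<omega> > 0" if "\<omega> \<subseteq> K" for \<omega>
    unfolding rho_w_def using xK that by (intro prod_pos) (auto intro: divide_pos_pos)
  have xSpos: "(\<Prod>C\<in>S \<eta>. x C) > 0" for \<eta> using xK SK[of \<eta>] by (intro prod_pos) auto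
  have sd_sub: "sd \<omega> \<subseteq> CY" for \<omega> unfolding sd_def CY_def sigma_down_def by auto
  have sd_iff: "\<eta> \<in> sd \<omega> \<longleftrightarrow> S \<eta> \<subseteq> \<omega>" if "\<eta> \<in> CY" for \<eta> \<omega>
    using that unfolding sd_def CY_def S_def sigma_down_def by auto
  have sdfin: "finite (sd \<omega>)" for \<omega> using sd_sub finCY finite_subset by blast
  have sdpos: "card (sd \<omega>) > 0" for \<omega>
  proof -
    have "(\<lambda>_. 0) \<in> sd \<omega>" using sd_iff[OF zCY, of \<omega>] supp_zero[of L k] unfolding S_def by simp
    then show ?thesis using sdfin[of \<omega>] card_gt_0_iff by blast
  qed
  have jw: "joint_w L q k x \<omega> \<eta> = (if \<eta> \<in> sd \<omega> then rho_w x \<omega> else 0)" for \<omega> \<eta>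
    unfolding joint_w_def sd_def by simp
  have row: "(\<Sum>\<eta>\<in>CY. joint_w L q k x \<omega> \<eta>) = rho_w x \<omega> * card (sd \<omega>)" for \<omega>
  proof -
    have "(\<Sum>\<eta>\<in>CY. joint_w L q k x \<omega> \<eta>) = (\<Sum>\<eta>\<in>CY. if \<eta> \<in> sd \<omega> then rho_w x \<omega> else 0)"
      unfolding jw by simp
    also have "\<dots> = (\<Sum>\<eta>\<in>CY \<inter> sd \<omega>. rho_w x \<omega>)" by (rule sum.inter_restrict[OF finCY, symmetric])
    also have "CY \<inter> sd \<omega> = sd \<omega>" using sd_sub by blast
    finally show ?thesis by simp
  qed
  have col: "(\<Sum>\<omega>\<in>Pow K. joint_w L q k x \<omega> \<eta>) = (\<Prod>C\<in>S \<eta>. x C) / D" if "\<eta> \<in> CY" for \<eta>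
  proof -
    have "(\<Sum>\<omega>\<in>Pow K. joint_w L q k x \<omega> \<eta>) = (\<Sum>\<omega>\<in>Pow K. if S \<eta> \<subseteq> \<omega> then rho_w x \<omega> else 0)"
      unfolding jw using sd_iff[OF that] by simp
    also have "\<dots> = (\<Sum>\<omega>\<in>{\<omega> \<in> Pow K. S \<eta> \<subseteq> \<omega>}. rho_w x \<omega>)"
      by (rule sum.inter_filter[symmetric]) (use finK in simp)
    also have "\<dots> = (\<Sum>\<omega>\<in>{\<omega> \<in> Pow K. S \<eta> \<subseteq> \<omega>}. bernoulli_perc K x \<omega> / D)"
      using rho_bp[OF finK _ xK] Dpos by (intro sum.cong) (auto simp: D_def field_simps)
    also have "\<dots> = (\<Sum>\<omega>\<in>{\<omega> \<in> Pow K. S \<eta> \<subseteq> \<omega>}. bernoulli_perc K x \<omega>) / D"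
      by (simp add: sum_divide_distrib)
    also have "\<dots> = (\<Prod>C\<in>S \<eta>. x C) / D" using sum_up[OF finK SK] by simp
    finally show ?thesis .
  qed
  have Z1: "Z = (\<Sum>\<omega>\<in>Pow K. rho_w x \<omega> * card (sd \<omega>))"
    unfolding Z_def K_def[symmetric] CY_def[symmetric] using row by simp
  have Z2: "Z = (\<Sum>\<eta>\<in>CY. (\<Prod>C\<in>S \<eta>. x C) / D)"
  proof -
    have "Z = (\<Sum>\<eta>\<in>CY. \<Sum>\<omega>\<in>Pow K. joint_w L q k x \<omega> \<eta>)"
      unfolding Z_def K_def[symmetric] CY_def[symmetric] by (rule sum.swap)
    also have "\<dots> = (\<Sum>\<eta>\<in>CY. (\<Prod>C\<in>S \<eta>. x C) / D)" using col by simp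
    finally show ?thesis .
  qed
  have Zpos: "Z > 0" unfolding Z1 using finK rpos sdpos
    by (intro sum_pos) auto
  have jP: "jointP L q k x \<omega> \<eta> = joint_w L q k x \<omega> \<eta> / Z" for \<omega> \<eta>
    unfolding jointP_def Z_def by simp
  have mS: "marg_Sigma L q k x \<eta> = (\<Sum>\<omega>\<in>Pow K. joint_w L q k x \<omega> \<eta>) / Z" for \<eta>
    unfolding marg_Sigma_def jP K_def by (simp add: sum_divide_distrib)
  have mO: "marg_Omega L q k x \<omega> = rho_w x \<omega> * card (sd \<omega>) / Z" for \<omega>
    unfolding marg_Omega_def jP CY_def[symmetric] sum_divide_distrib[symmetric] row[of \<omega>] ..
  have partA: "\<forall>\<eta>\<in>cycles L q k. marg_Sigma L q k x \<eta> = flow_model L q k x \<eta>"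
  proof
    fix \<eta> assume e: "\<eta> \<in> cycles L q k"
    then have e': "\<eta> \<in> CY" by (simp add: CY_def)
    have "marg_Sigma L q k x \<eta> = ((\<Prod>C\<in>S \<eta>. x C) / D) / ((\<Sum>\<eta>'\<in>CY. (\<Prod>C\<in>S \<eta>'. x C)) / D)"
      unfolding mS col[OF e'] Z2 by (simp add: sum_divide_distrib)
    also have "\<dots> = (\<Prod>C\<in>S \<eta>. x C) / (\<Sum>\<eta>'\<in>CY. (\<Prod>C\<in>S \<eta>'. x C))"
      using Dpos by simp
    finally show "marg_Sigma L q k x \<eta> = flow_model L q k x \<eta>"
      unfolding flow_model_def S_def CY_def .
  qed
  have partB: "\<forall>\<omega>\<in>Pow (cells L k). \<forall>\<eta>\<in>cycles L q k.
          cond_given_omega L q k x \<omega> \<eta> =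
            (if \<eta> \<in> sigma_down L q k \<omega> then 1 / real (card (sigma_down L q k \<omega>)) else 0)"
  proof (intro ballI)
    fix \<omega> \<eta> assume o: "\<omega> \<in> Pow (cells L k)" and e: "\<eta> \<in> cycles L q k"
    have oK: "\<omega> \<subseteq> K" using o K_def by simp
    show "cond_given_omega L q k x \<omega> \<eta> =
            (if \<eta> \<in> sigma_down L q k \<omega> then 1 / real (card (sigma_down L q k \<omega>)) else 0)"
      unfolding cond_given_omega_def mO jP jw sd_def[symmetric]
      using rpos[OF oK] sdpos[of \<omega>] Zpos by simp
  qed
  have partC: "\<forall>p. (\<forall>C\<in>cells L k. 0 < p C \<and> p C < 1 \<and> x C = p C / (p C + real_of_int q * (1 - p C)))
          \<longrightarrow> (\<forall>\<omega>\<in>Pow (cells L k). marg_Omega L q k x \<omega> = rc_model L q k p \<omega>)"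
  proof (intro allI impI ballI)
    fix p \<omega> assume p: "\<forall>C\<in>cells L k. 0 < p C \<and> p C < 1 \<and> x C = p C / (p C + real_of_int q * (1 - p C))"
      and o: "\<omega> \<in> Pow (cells L k)"
    define A where "A = real (card {\<sigma> \<in> chains L q (k - 1). bd L q (k - 1) \<sigma> = (\<lambda>_. 0)})"
    have Apos: "A > 0"
    proof -
      have "finite {\<sigma> \<in> chains L q (k - 1). bd L q (k - 1) \<sigma> = (\<lambda>_. 0)}"
        using chains_finite[OF L, of q "k - 1"] by simp
      moreover have "(\<lambda>_. 0) \<in> {\<sigma> \<in> chains L q (k - 1). bd L q (k - 1) \<sigma> = (\<lambda>_. 0)}"
        using zero_chain[OF q0, of L "k - 1"] bd_zero[of L q "k - 1"] by blast
      ultimately show ?thesis unfolding A_def using card_gt_0_iff by fastforce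
    qed
    have rcw: "rc_weight L q k p \<omega>' = A * card (sd \<omega>') * rho_w x \<omega>'" if o': "\<omega>' \<subseteq> K" for \<omega>'
    proof -
      let ?I = "bd L q k ` CH L q k \<omega>'"
      have o'': "\<omega>' \<subseteq> cells L k" using o' K_def by simp
      have nat_eq: "nat q ^ card \<omega>' = card (sd \<omega>') * card ?I"
        using card_CH[OF L q0 o''] rank_nullity[OF L q0, of k \<omega>'] unfolding sd_def by simp
      have "real_of_int q ^ card \<omega>' = real (nat q ^ card \<omega>')" using q0 by simp
      then have qpow: "real_of_int q ^ card \<omega>' = real (card (sd \<omega>')) * real (card ?I)"
        unfolding nat_eq by simp
      have Ipos: "card ?I > 0"
      proof -
        have "(\<lambda>_. 0) \<in> CH L q k \<omega>'" unfolding CH_def using zero_chain[OF q0, of L k] supp_zero[of L k] by simp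
        moreover have "finite (CH L q k \<omega>')" unfolding CH_def using chains_finite[OF L, of q k] by simp
        ultimately show ?thesis by (simp add: card_gt_0_iff) blast
      qed
      have pp: "(\<Prod>C\<in>\<omega>'. p C / (1 - p C)) = real_of_int q ^ card \<omega>' * rho_w x \<omega>'"
      proof -
        have "(\<Prod>C\<in>\<omega>'. p C / (1 - p C)) = (\<Prod>C\<in>\<omega>'. real_of_int q * (x C / (1 - x C)))"
          using p o'' assms(3) by (intro prod.cong refl p_ratio) auto
        also have "\<dots> = real_of_int q ^ card \<omega>' * rho_w x \<omega>'"
          unfolding rho_w_def prod.distrib by simp
        finally show ?thesis .
      qed
      show ?thesis
        unfolding rc_weight_def A_def[symmetric] CH_def[symmetric] pp qpow using Ipos by simp
    qed
    have oK: "\<omega> \<subseteq> K" using o K_def by simp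
    have "rc_model L q k p \<omega> = (A * card (sd \<omega>) * rho_w x \<omega>) / (\<Sum>\<omega>'\<in>Pow K. A * card (sd \<omega>') * rho_w x \<omega>')"
    proof -
      have "(\<Sum>\<omega>'\<in>Pow K. rc_weight L q k p \<omega>') = (\<Sum>\<omega>'\<in>Pow K. A * card (sd \<omega>') * rho_w x \<omega>')"
        using rcw by (intro sum.cong) auto
      then show ?thesis unfolding rc_model_def K_def[symmetric] using rcw[OF oK] by simp
    qed
    also have "\<dots> = (A * card (sd \<omega>) * rho_w x \<omega>) / (A * Z)"
      unfolding Z1 by (simp add: sum_distrib_left mult_ac)
    also have "\<dots> = marg_Omega L q k x \<omega>" unfolding mO using Apos by (simp add: mult_ac)
    finally show "marg_Omega L q k x \<omega> = rc_model L q k p \<omega>" by simp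
  qed
  have partD: "\<forall>\<eta>\<in>cycles L q k. \<forall>\<omega>\<in>Pow (cells L k).
          cond_given_eta L q k x \<eta> \<omega> = union_law (cells L k) x (supp L k \<eta>) \<omega>"
  proof (intro ballI)
    fix \<eta> \<omega> assume e: "\<eta> \<in> cycles L q k" and o: "\<omega> \<in> Pow (cells L k)"
    have e': "\<eta> \<in> CY" using e CY_def by simp
    have oK: "\<omega> \<subseteq> K" using o K_def by simp
    have "cond_given_eta L q k x \<eta> \<omega> = joint_w L q k x \<omega> \<eta> / ((\<Prod>C\<in>S \<eta>. x C) / D)"
      unfolding cond_given_eta_def jP mS col[OF e'] using Zpos by simp
    also have "\<dots> = (if S \<eta> \<subseteq> \<omega> then rho_w x \<omega> * D / (\<Prod>C\<in>S \<eta>. x C) else 0)"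
      unfolding jw using sd_iff[OF e'] by simp
    also have "\<dots> = (if S \<eta> \<subseteq> \<omega> then bernoulli_perc K x \<omega> / (\<Prod>C\<in>S \<eta>. x C) else 0)"
      using rho_bp[OF finK oK xK] unfolding D_def by simp
    also have "\<dots> = union_law K x (S \<eta>) \<omega>"
      using union_law_eq[OF finK SK oK, of x] xSpos[of \<eta>] by simp
    finally show "cond_given_eta L q k x \<eta> \<omega> = union_law (cells L k) x (supp L k \<eta>) \<omega>"
      unfolding K_def S_def .
  qed
  show ?thesis using partA partB partC partD by blast
qed

end
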